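(* Let $(M,g)$ be a Lorentzian manifold and let $X$ be a null-connecting Jacobi field along a null geodesic segment $\gamma$ (defined on an interval containing $0$) with $X(0)$ timelike. Then $X$ has no zeros on $\gamma$.
   Context: A Jacobi field along a null geodesic is null-connecting if it arises as $X=\gamma_*\partial_\lambda$ from a differentiable one-parameter family $\gamma(\lambda,s)$ of affinely parameterised null geodesics $s\mapsto\gamma(\lambda,s)$. *)

theory Defs
  imports "HOL-Analysis.Analysis"
begin

fun pd :: "'a::euclidean_space list \<Rightarrow> ('a \<Rightarrow> real) \<Rightarrow> 'a \<Rightarrow> real" where
  "pd [] f = f"
| "pd (b # bs) f = (\<lambda>x. deriv (\<lambda>t. pd bs f (x + t *\<^sub>R b)) 0)"

definition smooth_map_on :: "'a::euclidean_space set \<Rightarrow> ('a \<Rightarrow> 'b::euclidean_space) \<Rightarrow> bool" where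
  "smooth_map_on S f \<longleftrightarrow> open S \<and>
     (\<forall>bs c. set bs \<subseteq> Basis \<and> c \<in> Basis \<longrightarrow>
        continuous_on S (pd bs (\<lambda>x. f x \<bullet> c)) \<and>
        (\<forall>b\<in>Basis. \<forall>x\<in>S. (\<lambda>t. pd bs (\<lambda>x. f x \<bullet> c) (x + t *\<^sub>R b)) differentiable (at 0)))"

type_synonym ('m, 'n) chart = "'m set \<times> ('m \<Rightarrow> real^'n)"

definition is_chart :: "('m::topological_space, 'n::finite) chart \<Rightarrow> bool" where
  "is_chart c \<longleftrightarrow> open (fst c) \<and> open (snd c ` fst c) \<and>
     homeomorphism (fst c) (snd c ` fst c) (snd c) (inv_into (fst c) (snd c))"

definition transition :: "('m, 'n) chart \<Rightarrow> ('m, 'n) chart \<Rightarrow> real^'n \<Rightarrow> real^'n" where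
  "transition c d = snd d \<circ> inv_into (fst c) (snd c)"

definition smooth_atlas :: "('m::topological_space, 'n::finite) chart set \<Rightarrow> bool" where
  "smooth_atlas A \<longleftrightarrow> (\<forall>c\<in>A. is_chart c) \<and> (\<Union>(fst ` A) = UNIV) \<and>
     (\<forall>c\<in>A. \<forall>d\<in>A. smooth_map_on (snd c ` (fst c \<inter> fst d)) (transition c d))"

definition lorentzian_form :: "real^'n^'n \<Rightarrow> bool" where
  "lorentzian_form g \<longleftrightarrow> transpose g = g \<and> det g \<noteq> 0 \<and>
     (\<exists>v. v \<bullet> (g *v v) < 0) \<and>
     (\<forall>S. subspace S \<and> (\<forall>v\<in>S. v \<noteq> 0 \<longrightarrow> v \<bullet> (g *v v) < 0) \<longrightarrow> dim S \<le> 1)"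

text \<open>G c x = matrix of the metric g_ij in chart c at coordinate point x.\<close>
definition lorentzian_metric ::
  "('m::topological_space, 'n::finite) chart set \<Rightarrow> (('m, 'n) chart \<Rightarrow> real^'n \<Rightarrow> real^'n^'n) \<Rightarrow> bool" where
  "lorentzian_metric A G \<longleftrightarrow>
     (\<forall>c\<in>A. smooth_map_on (snd c ` fst c) (G c) \<and> (\<forall>x\<in>snd c ` fst c. lorentzian_form (G c x))) \<and>
     (\<forall>c\<in>A. \<forall>d\<in>A. \<forall>x\<in>snd c ` (fst c \<inter> fst d).
        G c x = transpose (jacobian (transition c d) (at x)) ** G d (transition c d x)
                  ** jacobian (transition c d) (at x))"

definition lorentzian_manifold ::
  "('m::{t2_space, second_countable_topology}, 'n::finite) chart set \<Rightarrow> (('m, 'n) chart \<Rightarrow> real^'n \<Rightarrow> real^'n^'n) \<Rightarrow> bool" where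
  "lorentzian_manifold A G \<longleftrightarrow> CARD('n) \<ge> 2 \<and> smooth_atlas A \<and> lorentzian_metric A G"

definition christoffel :: "(real^'n \<Rightarrow> real^'n^'n) \<Rightarrow> real^'n \<Rightarrow> 'n::finite \<Rightarrow> 'n \<Rightarrow> 'n \<Rightarrow> real" where
  "christoffel g x k i j = (1/2) * (\<Sum>l\<in>UNIV. matrix_inv (g x) $ k $ l *
      (pd [axis i 1] (\<lambda>y. g y $ j $ l) x + pd [axis j 1] (\<lambda>y. g y $ i $ l) x
       - pd [axis l 1] (\<lambda>y. g y $ i $ j) x))"

definition coord_partial ::
  "('m, 'n::finite) chart \<Rightarrow> (real \<times> real \<Rightarrow> 'm) \<Rightarrow> (real \<times> real) list \<Rightarrow> real \<times> real \<Rightarrow> real^'n" where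
  "coord_partial c F bs p = (\<chi> k. pd bs (\<lambda>q. snd c (F q) $ k) p)"

definition smooth_family_on ::
  "('m::topological_space, 'n::finite) chart set \<Rightarrow> (real \<times> real) set \<Rightarrow> (real \<times> real \<Rightarrow> 'm) \<Rightarrow> bool" where
  "smooth_family_on A W F \<longleftrightarrow> open W \<and> continuous_on W F \<and>
     (\<forall>c\<in>A. smooth_map_on (W \<inter> F -` fst c) (snd c \<circ> F))"

definition null_geodesic_at ::
  "('m, 'n::finite) chart set \<Rightarrow> (('m, 'n) chart \<Rightarrow> real^'n \<Rightarrow> real^'n^'n) \<Rightarrow> (real \<times> real \<Rightarrow> 'm) \<Rightarrow> real \<times> real \<Rightarrow> bool" where
  "null_geodesic_at A G F p \<longleftrightarrow>
     (\<forall>c\<in>A. F p \<in> fst c \<longrightarrow>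
        (let v = coord_partial c F [(0,1)] p; a = coord_partial c F [(0,1),(0,1)] p;
             x = snd c (F p) in
         (\<forall>k. a $ k + (\<Sum>i\<in>UNIV. \<Sum>j\<in>UNIV. christoffel (G c) x k i j * v $ i * v $ j) = 0) \<and>
         v \<noteq> 0 \<and> v \<bullet> (G c x *v v) = 0))"

text \<open>The Jacobi field X = gamma_* d/d lambda at (0,s), in chart c.\<close>
definition jacobi_field_coord ::
  "('m, 'n::finite) chart \<Rightarrow> (real \<times> real \<Rightarrow> 'm) \<Rightarrow> real \<Rightarrow> real^'n" where
  "jacobi_field_coord c F s = coord_partial c F [(1,0)] (0, s)"

text \<open>X is null-connecting along the null geodesic segment s |-> F(0,s), s in I:
  F is a smooth family of affinely parametrised null geodesics s |-> F(lambda,s), s in I,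
  for lambda in an open interval J around 0 (smooth on an open neighbourhood W of J x I).\<close>
definition null_connecting_family ::
  "('m::topological_space, 'n::finite) chart set \<Rightarrow> (('m, 'n) chart \<Rightarrow> real^'n \<Rightarrow> real^'n^'n)
    \<Rightarrow> real set \<Rightarrow> real set \<Rightarrow> (real \<times> real \<Rightarrow> 'm) \<Rightarrow> bool" where
  "null_connecting_family A G J I F \<longleftrightarrow>
     open J \<and> is_interval J \<and> 0 \<in> J \<and>
     (\<exists>W. J \<times> I \<subseteq> W \<and> smooth_family_on A W F) \<and>
     (\<forall>l\<in>J. \<forall>s\<in>I. null_geodesic_at A G F (l, s))"

end

theory Submission
  imports Defs
begin


lemma c1_induct:
  fixes f :: "'a::euclidean_space \<Rightarrow> real"
  assumes S: "open S" "x \<in> S"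
    and D: "\<And>b y. b \<in> Basis \<Longrightarrow> y \<in> S \<Longrightarrow> ((\<lambda>t. f (y + t *\<^sub>R b)) has_real_derivative Df b y) (at 0)"
    and cont: "\<And>b. b \<in> Basis \<Longrightarrow> continuous_on S (Df b)"
    and B: "B \<subseteq> Basis"
  shows "\<forall>e>0. \<exists>d>0. \<forall>h. (\<forall>b\<in>Basis - B. h \<bullet> b = 0) \<longrightarrow> norm h < d \<longrightarrow>
           \<bar>f (x + h) - f x - (\<Sum>b\<in>B. (h \<bullet> b) * Df b x)\<bar> \<le> e * norm h"
proof -
  have "finite B" using B finite_Basis finite_subset by blast
  then show ?thesis using B
  proof (induction B rule: finite_induct)
    case empty
    have "h = 0" if "\<forall>b\<in>Basis - {}. h \<bullet> b = 0" for h :: 'a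
      using that euclidean_all_zero_iff by auto
    show ?case
    proof (intro allI impI exI[of _ "1::real"] conjI)
      fix e :: real and h :: 'a assume "\<forall>b\<in>Basis - {}. h \<bullet> b = 0"
      then have "h = 0" using \<open>\<And>h. _ \<Longrightarrow> h = 0\<close> by blast
      then show "\<bar>f (x + h) - f x - (\<Sum>b\<in>{}. (h \<bullet> b) * Df b x)\<bar> \<le> e * norm h" by simp
    qed simp
  next
    case (insert b B)
    have bB: "b \<in> Basis" "B \<subseteq> Basis" using insert.prems by auto
    show ?case
    proof (intro allI impI)
      fix e :: real assume e: "e > 0"
      obtain d1 where d1: "d1 > 0" and
        H1: "\<And>h. (\<forall>c\<in>Basis - B. h \<bullet> c = 0) \<Longrightarrow> norm h < d1 \<Longrightarrow>
           \<bar>f (x + h) - f x - (\<Sum>c\<in>B. (h \<bullet> c) * Df c x)\<bar> \<le> e/2 * norm h"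
        using insert.IH[OF bB(2)] e by (meson half_gt_zero)
      have "continuous (at x) (Df b)"
        using cont[OF bB(1)] S continuous_on_eq_continuous_at by blast
      then obtain d2 where d2: "d2 > 0" and H2: "\<And>y. dist y x < d2 \<Longrightarrow> dist (Df b y) (Df b x) < e/2"
        using e unfolding continuous_at_eps_delta by (meson half_gt_zero)
      obtain d3 where d3: "d3 > 0" "ball x d3 \<subseteq> S" using S openE by blast
      define d where "d = min d1 (min d2 d3)"
      have d: "d > 0" using d1 d2 d3 by (simp add: d_def)
      show "\<exists>d>0. \<forall>h. (\<forall>c\<in>Basis - insert b B. h \<bullet> c = 0) \<longrightarrow> norm h < d \<longrightarrow>
           \<bar>f (x + h) - f x - (\<Sum>c\<in>insert b B. (h \<bullet> c) * Df c x)\<bar> \<le> e * norm h"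
      proof (intro exI[of _ d] conjI allI impI d)
        fix h :: 'a
        assume hB: "\<forall>c\<in>Basis - insert b B. h \<bullet> c = 0" and hd: "norm h < d"
        define t where "t = h \<bullet> b"
        define h' where "h' = h - t *\<^sub>R b"
        have bb: "b \<bullet> b = 1" using bB(1) by simp
        have h'b: "h' \<bullet> b = 0" by (simp add: h'_def t_def inner_diff_left bb)
        have h'c: "h' \<bullet> c = h \<bullet> c" if "c \<in> Basis" "c \<noteq> b" for c
          using that bB(1) by (simp add: h'_def inner_diff_left inner_not_same_Basis)
        have h'B: "\<forall>c\<in>Basis - B. h' \<bullet> c = 0"
          using hB h'b h'c by (metis Diff_iff insertE)
        have "h' \<bullet> h' = h \<bullet> h - t ^ 2"
          unfolding h'_def t_def
          by (simp add: inner_diff_left inner_diff_right bb inner_commute[of b h] power2_eq_square)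
        then have nh': "norm h' ^ 2 = norm h ^ 2 - t ^ 2"
          by (simp add: power2_norm_eq_inner)
        have nt: "\<bar>t\<bar> \<le> norm h" unfolding t_def using Basis_le_norm bB(1) by blast
        have nh'le: "norm h' \<le> norm h"
        proof (rule power2_le_imp_le)
          show "norm h' ^ 2 \<le> norm h ^ 2" using nh' by (simp add: zero_le_power2)
        qed simp
        have sumeq: "(\<Sum>c\<in>B. (h \<bullet> c) * Df c x) = (\<Sum>c\<in>B. (h' \<bullet> c) * Df c x)"
        proof (rule sum.cong[OF refl])
          fix c assume "c \<in> B"
          then have "c \<in> Basis" "c \<noteq> b" using bB insert.hyps(2) by auto
          then show "(h \<bullet> c) * Df c x = (h' \<bullet> c) * Df c x" using h'c by simp
        qed
        have part1: "\<bar>f (x + h') - f x - (\<Sum>c\<in>B. (h \<bullet> c) * Df c x)\<bar> \<le> e/2 * norm h'"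
        proof -
          have "norm h' < d1" using nh'le hd unfolding d_def by linarith
          from H1[OF h'B this] show ?thesis unfolding sumeq .
        qed
        define y where "y = x + h'"
        have inball: "y + u *\<^sub>R b \<in> ball x d" if "\<bar>u\<bar> \<le> \<bar>t\<bar>" for u
        proof -
          have "(h' + u *\<^sub>R b) \<bullet> (h' + u *\<^sub>R b) = h' \<bullet> h' + u ^ 2"
            using h'b by (simp add: inner_add_left inner_add_right bb inner_commute[of b h'] power2_eq_square)
          then have "norm (h' + u *\<^sub>R b) ^ 2 = norm h' ^ 2 + u ^ 2"
            by (simp add: power2_norm_eq_inner)
          also have "\<dots> \<le> norm h' ^ 2 + t ^ 2" using that by (simp add: abs_le_square_iff)
          also have "\<dots> = norm h ^ 2" using nh' by simp
          finally have "norm (h' + u *\<^sub>R b) \<le> norm h" by (rule power2_le_imp_le) simp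
          moreover have "dist x (y + u *\<^sub>R b) = norm (h' + u *\<^sub>R b)"
            unfolding y_def dist_norm by (metis add_diff_cancel_left' add.assoc norm_minus_commute)
          ultimately show ?thesis using hd unfolding d_def mem_ball by linarith
        qed
        have inS: "y + u *\<^sub>R b \<in> S" if "\<bar>u\<bar> \<le> \<bar>t\<bar>" for u
          using inball[OF that] d3(2) ball_subset_ball_iff[of x d x d3] unfolding d_def by auto
        define \<psi> where "\<psi> u = f (y + u *\<^sub>R b) - u * Df b x" for u
        have dpsi: "(\<psi> has_real_derivative (Df b (y + u *\<^sub>R b) - Df b x)) (at u)" if "\<bar>u\<bar> \<le> \<bar>t\<bar>" for u
        proof -
          have "((\<lambda>s. f ((y + u *\<^sub>R b) + s *\<^sub>R b)) has_real_derivative Df b (y + u *\<^sub>R b)) (at 0)"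
            using D[OF bB(1) inS[OF that]] .
          then have "((\<lambda>s. f (y + (s + u) *\<^sub>R b)) has_real_derivative Df b (y + u *\<^sub>R b)) (at 0)"
            by (simp add: scaleR_add_left add.assoc add.commute add.left_commute)
          then have "((\<lambda>s. f (y + s *\<^sub>R b)) has_real_derivative Df b (y + u *\<^sub>R b)) (at (0 + u))"
            using DERIV_shift by blast
          then show ?thesis unfolding \<psi>_def
            by (auto intro!: derivative_eq_intros)
        qed
        have bnd: "\<bar>Df b (y + u *\<^sub>R b) - Df b x\<bar> \<le> e/2" if "\<bar>u\<bar> \<le> \<bar>t\<bar>" for u
          using H2[of "y + u *\<^sub>R b"] inball[OF that] d_def by (auto simp: dist_commute dist_real_def abs_minus_commute)
        have part2: "\<bar>\<psi> t - \<psi> 0\<bar> \<le> e/2 * \<bar>t\<bar>"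
        proof (cases "t = 0")
          case True then show ?thesis by simp
        next
          case False
          then have lt: "min 0 t < max 0 t" by auto
          obtain z where z: "min 0 t < z" "z < max 0 t"
            and eq: "\<psi> (max 0 t) - \<psi> (min 0 t) = (max 0 t - min 0 t) * (Df b (y + z *\<^sub>R b) - Df b x)"
          proof (rule MVT2[OF lt, of \<psi> "\<lambda>u. Df b (y + u *\<^sub>R b) - Df b x", THEN exE])
            fix u assume "min 0 t \<le> u" "u \<le> max 0 t"
            then have "\<bar>u\<bar> \<le> \<bar>t\<bar>" by auto
            then show "(\<psi> has_real_derivative Df b (y + u *\<^sub>R b) - Df b x) (at u)" by (rule dpsi)
          qed blast
          have zt: "\<bar>z\<bar> \<le> \<bar>t\<bar>" using z by auto
          have "\<bar>\<psi> t - \<psi> 0\<bar> = \<bar>\<psi> (max 0 t) - \<psi> (min 0 t)\<bar>"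
            by (cases "t \<ge> 0") (auto simp: abs_minus_commute)
          also have "\<dots> = \<bar>t\<bar> * \<bar>Df b (y + z *\<^sub>R b) - Df b x\<bar>"
            unfolding eq by (cases "t \<ge> 0") (auto simp: abs_mult)
          also have "\<dots> \<le> \<bar>t\<bar> * (e/2)" using bnd[OF zt] by (intro mult_left_mono) auto
          finally show ?thesis by (simp add: mult.commute)
        qed
        have hsplit: "x + h = y + t *\<^sub>R b" by (simp add: y_def h'_def)
        have "f (x + h) - f x - (\<Sum>c\<in>insert b B. (h \<bullet> c) * Df c x)
            = (\<psi> t - \<psi> 0) + (f (x + h') - f x - (\<Sum>c\<in>B. (h \<bullet> c) * Df c x))"
          using insert.hyps by (simp add: \<psi>_def hsplit y_def t_def)
        then have "\<bar>f (x + h) - f x - (\<Sum>c\<in>insert b B. (h \<bullet> c) * Df c x)\<bar>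
            \<le> e/2 * \<bar>t\<bar> + e/2 * norm h'"
          using part1 part2 by linarith
        also have "\<dots> \<le> e/2 * norm h + e/2 * norm h"
          using nt nh'le e by (intro add_mono mult_left_mono) auto
        finally show "\<bar>f (x + h) - f x - (\<Sum>c\<in>insert b B. (h \<bullet> c) * Df c x)\<bar> \<le> e * norm h" by simp
      qed
    qed
  qed
qed

lemma c1_diff:
  fixes f :: "'a::euclidean_space \<Rightarrow> real"
  assumes S: "open S" "x \<in> S"
    and D: "\<And>b y. b \<in> Basis \<Longrightarrow> y \<in> S \<Longrightarrow> ((\<lambda>t. f (y + t *\<^sub>R b)) has_real_derivative Df b y) (at 0)"
    and cont: "\<And>b. b \<in> Basis \<Longrightarrow> continuous_on S (Df b)"
  shows "(f has_derivative (\<lambda>h. \<Sum>b\<in>Basis. (h \<bullet> b) * Df b x)) (at x)"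
proof -
  have P: "\<forall>e>0. \<exists>d>0. \<forall>h. norm h < d \<longrightarrow>
           \<bar>f (x + h) - f x - (\<Sum>b\<in>Basis. (h \<bullet> b) * Df b x)\<bar> \<le> e * norm h"
    using c1_induct[OF S D cont, of Basis] by auto
  have bl: "bounded_linear (\<lambda>h. \<Sum>b\<in>Basis. (h \<bullet> b) * Df b x)"
    by (intro bounded_linear_sum bounded_linear_compose[OF bounded_linear_mult_left bounded_linear_inner_left])
  show ?thesis unfolding has_derivative_at_alt
  proof (intro conjI bl allI impI)
    fix e :: real assume "e > 0"
    then obtain d where "d > 0" and H: "\<And>h. norm h < d \<Longrightarrow>
           \<bar>f (x + h) - f x - (\<Sum>b\<in>Basis. (h \<bullet> b) * Df b x)\<bar> \<le> e * norm h" using P by blast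
    show "\<exists>d>0. \<forall>y. norm (y - x) < d \<longrightarrow> norm (f y - f x - (\<Sum>b\<in>Basis. ((y - x) \<bullet> b) * Df b x)) \<le> e * norm (y - x)"
      using H[of "_ - x"] \<open>d > 0\<close> by (auto intro!: exI[of _ d])
  qed
qed



definition sm :: "'a::euclidean_space set \<Rightarrow> ('a \<Rightarrow> real) \<Rightarrow> bool" where
  "sm S f \<longleftrightarrow> open S \<and> (\<forall>bs. set bs \<subseteq> Basis \<longrightarrow> continuous_on S (pd bs f) \<and>
     (\<forall>b\<in>Basis. \<forall>x\<in>S. (\<lambda>t. pd bs f (x + t *\<^sub>R b)) differentiable (at 0)))"

lemma sm_of_smooth: "smooth_map_on S f \<Longrightarrow> c \<in> Basis \<Longrightarrow> sm S (\<lambda>x. f x \<bullet> c)"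
  unfolding smooth_map_on_def sm_def by blast

lemma sm_open: "sm S f \<Longrightarrow> open S" unfolding sm_def by blast

lemma sm_cont: "sm S f \<Longrightarrow> set bs \<subseteq> Basis \<Longrightarrow> continuous_on S (pd bs f)"
  unfolding sm_def by blast

lemma sm_DERIV0:
  assumes "sm S f" "set bs \<subseteq> Basis" "b \<in> Basis" "y \<in> S"
  shows "((\<lambda>t. pd bs f (y + t *\<^sub>R b)) has_real_derivative pd (b # bs) f y) (at 0)"
  using assms unfolding sm_def by (simp add: DERIV_deriv_iff_real_differentiable)

lemma sm_DERIV:
  assumes "sm S f" "set bs \<subseteq> Basis" "b \<in> Basis" "y + u *\<^sub>R b \<in> S"
  shows "((\<lambda>t. pd bs f (y + t *\<^sub>R b)) has_real_derivative pd (b # bs) f (y + u *\<^sub>R b)) (at u)"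
proof -
  have "((\<lambda>t. pd bs f ((y + u *\<^sub>R b) + t *\<^sub>R b)) has_real_derivative pd (b # bs) f (y + u *\<^sub>R b)) (at 0)"
    using sm_DERIV0[OF assms] .
  then have "((\<lambda>t. pd bs f (y + (t + u) *\<^sub>R b)) has_real_derivative pd (b # bs) f (y + u *\<^sub>R b)) (at 0)"
    by (simp add: scaleR_add_left add.assoc add.commute add.left_commute)
  then have "((\<lambda>t. pd bs f (y + t *\<^sub>R b)) has_real_derivative pd (b # bs) f (y + u *\<^sub>R b)) (at (0 + u))"
    using DERIV_shift by blast
  then show ?thesis by simp
qed

lemma sm_C1:
  assumes "sm S f" "x \<in> S"
  shows "(f has_derivative (\<lambda>h. \<Sum>b\<in>Basis. (h \<bullet> b) * pd [b] f x)) (at x)"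
proof (rule c1_diff[OF sm_open[OF assms(1)] assms(2)])
  fix b y :: 'a assume "b \<in> Basis" "y \<in> S"
  then show "((\<lambda>t. f (y + t *\<^sub>R b)) has_real_derivative pd [b] f y) (at 0)"
    using sm_DERIV0[OF assms(1), of "[]" b y] by simp
next
  fix b :: 'a assume "b \<in> Basis"
  then show "continuous_on S (pd [b] f)" using sm_cont[OF assms(1), of "[b]"] by simp
qed



lemma mixed_half:
  fixes f :: "'a::real_normed_vector \<Rightarrow> real"
  assumes U: "\<And>a b. \<bar>a\<bar> \<le> h \<Longrightarrow> \<bar>b\<bar> \<le> h \<Longrightarrow> p + a *\<^sub>R u + b *\<^sub>R v \<in> U"
    and h: "h > 0"
    and Du: "\<And>y a. y + a *\<^sub>R u \<in> U \<Longrightarrow> ((\<lambda>t. f (y + t *\<^sub>R u)) has_real_derivative fu (y + a *\<^sub>R u)) (at a)"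
    and Duv: "\<And>y a. y + a *\<^sub>R v \<in> U \<Longrightarrow> ((\<lambda>t. fu (y + t *\<^sub>R v)) has_real_derivative fuv (y + a *\<^sub>R v)) (at a)"
  shows "\<exists>a b. \<bar>a\<bar> \<le> h \<and> \<bar>b\<bar> \<le> h \<and>
     f (p + h *\<^sub>R u + h *\<^sub>R v) - f (p + h *\<^sub>R u) - f (p + h *\<^sub>R v) + f p = h * h * fuv (p + a *\<^sub>R u + b *\<^sub>R v)"
proof -
  define \<phi> where "\<phi> a = f (p + h *\<^sub>R v + a *\<^sub>R u) - f (p + a *\<^sub>R u)" for a
  have d\<phi>: "(\<phi> has_real_derivative (fu (p + h *\<^sub>R v + a *\<^sub>R u) - fu (p + a *\<^sub>R u))) (at a)"
    if "0 \<le> a" "a \<le> h" for a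
  proof -
    have 1: "p + h *\<^sub>R v + a *\<^sub>R u \<in> U" using U[of a h] that h by (simp add: add_ac)
    have 2: "p + a *\<^sub>R u \<in> U" using U[of a 0] that h by simp
    show ?thesis unfolding \<phi>_def
      by (intro DERIV_diff Du 1 2)
  qed
  have "\<exists>a. 0 < a \<and> a < h \<and> \<phi> h - \<phi> 0 = (h - 0) * (fu (p + h *\<^sub>R v + a *\<^sub>R u) - fu (p + a *\<^sub>R u))"
    by (rule MVT2[OF h, of \<phi> "\<lambda>a. fu (p + h *\<^sub>R v + a *\<^sub>R u) - fu (p + a *\<^sub>R u)"]) (rule d\<phi>)
  then obtain a where a: "0 < a" "a < h" and
    ea: "\<phi> h - \<phi> 0 = (h - 0) * (fu (p + h *\<^sub>R v + a *\<^sub>R u) - fu (p + a *\<^sub>R u))"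
    by blast
  define \<psi> where "\<psi> b = fu (p + a *\<^sub>R u + b *\<^sub>R v)" for b
  have d\<psi>: "(\<psi> has_real_derivative fuv (p + a *\<^sub>R u + b *\<^sub>R v)) (at b)" if "0 \<le> b" "b \<le> h" for b
    unfolding \<psi>_def using that a by (intro Duv U) auto
  have "\<exists>b. 0 < b \<and> b < h \<and> \<psi> h - \<psi> 0 = (h - 0) * fuv (p + a *\<^sub>R u + b *\<^sub>R v)"
    by (rule MVT2[OF h, of \<psi> "\<lambda>b. fuv (p + a *\<^sub>R u + b *\<^sub>R v)"]) (rule d\<psi>)
  then obtain b where b: "0 < b" "b < h" and
    eb: "\<psi> h - \<psi> 0 = (h - 0) * fuv (p + a *\<^sub>R u + b *\<^sub>R v)"
    by blast
  have "f (p + h *\<^sub>R u + h *\<^sub>R v) - f (p + h *\<^sub>R u) - f (p + h *\<^sub>R v) + f p = \<phi> h - \<phi> 0"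
    by (simp add: \<phi>_def add_ac)
  also have "\<dots> = h * (\<psi> h - \<psi> 0)" unfolding ea \<psi>_def by (simp add: add_ac)
  also have "\<dots> = h * h * fuv (p + a *\<^sub>R u + b *\<^sub>R v)" unfolding eb by simp
  finally show ?thesis using a b by (intro exI[of _ a] exI[of _ b]) auto
qed

lemma mixed_sym:
  fixes f :: "'a::real_normed_vector \<Rightarrow> real"
  assumes U: "open U" "p \<in> U"
    and Du: "\<And>y a. y + a *\<^sub>R u \<in> U \<Longrightarrow> ((\<lambda>t. f (y + t *\<^sub>R u)) has_real_derivative fu (y + a *\<^sub>R u)) (at a)"
    and Dv: "\<And>y a. y + a *\<^sub>R v \<in> U \<Longrightarrow> ((\<lambda>t. f (y + t *\<^sub>R v)) has_real_derivative fv (y + a *\<^sub>R v)) (at a)"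
    and Duv: "\<And>y a. y + a *\<^sub>R v \<in> U \<Longrightarrow> ((\<lambda>t. fu (y + t *\<^sub>R v)) has_real_derivative fuv (y + a *\<^sub>R v)) (at a)"
    and Dvu: "\<And>y a. y + a *\<^sub>R u \<in> U \<Longrightarrow> ((\<lambda>t. fv (y + t *\<^sub>R u)) has_real_derivative fvu (y + a *\<^sub>R u)) (at a)"
    and c1: "continuous (at p) fuv" and c2: "continuous (at p) fvu"
  shows "fuv p = fvu p"
proof (rule ccontr)
  assume ne: "fuv p \<noteq> fvu p"
  define e where "e = \<bar>fuv p - fvu p\<bar> / 2"
  have e: "e > 0" using ne by (simp add: e_def)
  obtain r1 where r1: "r1 > 0" "\<And>y. dist y p < r1 \<Longrightarrow> dist (fuv y) (fuv p) < e"
    using c1 e unfolding continuous_at_eps_delta by blast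
  obtain r2 where r2: "r2 > 0" "\<And>y. dist y p < r2 \<Longrightarrow> dist (fvu y) (fvu p) < e"
    using c2 e unfolding continuous_at_eps_delta by blast
  obtain r3 where r3: "r3 > 0" "ball p r3 \<subseteq> U" using U openE by blast
  define r where "r = min r1 (min r2 r3)"
  have r: "r > 0" using r1 r2 r3 by (simp add: r_def)
  define h where "h = r / (2 * (norm u + norm v + 1))"
  have "norm u + norm v + 1 > 0" by (simp add: add_nonneg_pos)
  then have h: "h > 0" using r unfolding h_def by simp
  have near: "dist (p + a *\<^sub>R u + b *\<^sub>R v) p < r" if "\<bar>a\<bar> \<le> h" "\<bar>b\<bar> \<le> h" for a b
  proof -
    have "dist (p + a *\<^sub>R u + b *\<^sub>R v) p = norm (a *\<^sub>R u + b *\<^sub>R v)" by (simp add: dist_norm)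
    also have "\<dots> \<le> \<bar>a\<bar> * norm u + \<bar>b\<bar> * norm v" by (metis norm_scaleR norm_triangle_ineq)
    also have "\<dots> \<le> h * norm u + h * norm v" using that by (intro add_mono mult_right_mono) auto
    also have "\<dots> < h * (2 * (norm u + norm v + 1))"
    proof -
      have "h * (2 * (norm u + norm v + 1)) = 2*(h*norm u) + 2*(h*norm v) + 2*h" by (simp add: algebra_simps)
      moreover have "0 \<le> h*norm u" "0 \<le> h*norm v" using h by simp_all
      ultimately show ?thesis using h by linarith
    qed
    also have "\<dots> = r" using \<open>norm u + norm v + 1 > 0\<close> unfolding h_def by simp
    finally show ?thesis .
  qed
  have inU: "p + a *\<^sub>R u + b *\<^sub>R v \<in> U" if "\<bar>a\<bar> \<le> h" "\<bar>b\<bar> \<le> h" for a b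
  proof -
    have "dist p (p + a *\<^sub>R u + b *\<^sub>R v) < r3" using near[OF that] unfolding r_def by (simp add: dist_commute)
    then show ?thesis using r3(2) by auto
  qed
  obtain a1 b1 where ab1: "\<bar>a1\<bar> \<le> h" "\<bar>b1\<bar> \<le> h" and
    E1: "f (p + h *\<^sub>R u + h *\<^sub>R v) - f (p + h *\<^sub>R u) - f (p + h *\<^sub>R v) + f p = h * h * fuv (p + a1 *\<^sub>R u + b1 *\<^sub>R v)"
    using mixed_half[of h p u v U f fu fuv, OF inU h Du Duv] by blast
  have inU': "p + a *\<^sub>R v + b *\<^sub>R u \<in> U" if "\<bar>a\<bar> \<le> h" "\<bar>b\<bar> \<le> h" for a b
  proof -
    have eqn: "p + a *\<^sub>R v + b *\<^sub>R u = p + b *\<^sub>R u + a *\<^sub>R v" by (simp add: algebra_simps)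
    show ?thesis unfolding eqn using inU[OF that(2,1)] .
  qed
  obtain a2 b2 where ab2: "\<bar>a2\<bar> \<le> h" "\<bar>b2\<bar> \<le> h" and
    E2: "f (p + h *\<^sub>R v + h *\<^sub>R u) - f (p + h *\<^sub>R v) - f (p + h *\<^sub>R u) + f p = h * h * fvu (p + a2 *\<^sub>R v + b2 *\<^sub>R u)"
    using mixed_half[of h p v u U f fv fvu, OF inU' h Dv Dvu] by blast
  have c1': "p + h *\<^sub>R v + h *\<^sub>R u = p + h *\<^sub>R u + h *\<^sub>R v" by (simp add: algebra_simps)
  have c2': "p + a2 *\<^sub>R v + b2 *\<^sub>R u = p + b2 *\<^sub>R u + a2 *\<^sub>R v" by (simp add: algebra_simps)
  have "h * h * fuv (p + a1 *\<^sub>R u + b1 *\<^sub>R v) = h * h * fvu (p + b2 *\<^sub>R u + a2 *\<^sub>R v)"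
    using E1 E2 unfolding c1' c2' by linarith
  then have eq: "fuv (p + a1 *\<^sub>R u + b1 *\<^sub>R v) = fvu (p + b2 *\<^sub>R u + a2 *\<^sub>R v)"
    using h by simp
  have "dist (fuv (p + a1 *\<^sub>R u + b1 *\<^sub>R v)) (fuv p) < e" using r1(2) near[OF ab1] unfolding r_def by (meson min_less_iff_conj)
  moreover have "dist (fvu (p + b2 *\<^sub>R u + a2 *\<^sub>R v)) (fvu p) < e" using r2(2) near[OF ab2(2,1)] unfolding r_def by (meson min_less_iff_conj)
  ultimately have "\<bar>fuv p - fvu p\<bar> < 2 * e" using eq by (simp add: dist_real_def)
  then show False by (simp add: e_def)
qed



lemma geo_alg:
  fixes g gi :: "'n::finite \<Rightarrow> 'n \<Rightarrow> real" and dg :: "'n \<Rightarrow> 'n \<Rightarrow> 'n \<Rightarrow> real"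
    and X T X' A :: "'n \<Rightarrow> real"
  assumes sym: "\<And>k m. g k m = g m k" and dsym: "\<And>i k m. dg i k m = dg i m k"
    and inv: "\<And>k l. (\<Sum>m\<in>UNIV. g k m * gi m l) = (if k = l then 1 else 0)"
    and geo: "\<And>m. A m = - (\<Sum>i\<in>UNIV. \<Sum>j\<in>UNIV. (1/2 * (\<Sum>l\<in>UNIV. gi m l * (dg i j l + dg j i l - dg l i j))) * T i * T j)"
    and dN: "(\<Sum>k\<in>UNIV. \<Sum>m\<in>UNIV. X' k * g k m * T m + T k * (\<Sum>i\<in>UNIV. X i * dg i k m) * T m + T k * g k m * X' m) = 0"
  shows "(\<Sum>k\<in>UNIV. \<Sum>m\<in>UNIV. X' k * g k m * T m + X k * (\<Sum>i\<in>UNIV. T i * dg i k m) * T m + X k * g k m * A m) = 0"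
proof -
  define S1 where "S1 = (\<Sum>k\<in>UNIV. \<Sum>m\<in>UNIV. X' k * g k m * T m)"
  define P where "P = (\<Sum>k\<in>UNIV. \<Sum>m\<in>UNIV. X k * (\<Sum>i\<in>UNIV. T i * dg i k m) * T m)"
  define Xi where "Xi = (\<Sum>k\<in>UNIV. \<Sum>m\<in>UNIV. T k * (\<Sum>i\<in>UNIV. X i * dg i k m) * T m)"
  define C where "C l = (\<Sum>i\<in>UNIV. \<Sum>j\<in>UNIV. (dg i j l + dg j i l - dg l i j) * T i * T j)" for l
  have h1: "(\<Sum>k\<in>UNIV. \<Sum>m\<in>UNIV. T k * g k m * X' m) = S1"
    unfolding S1_def by (subst sum.swap) (simp add: sym mult_ac)
  have dN': "2 * S1 + Xi = 0"
    using dN h1 unfolding S1_def Xi_def by (simp add: sum.distrib)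
  have Am: "A m = - (1/2 * (\<Sum>l\<in>UNIV. gi m l * C l))" for m
  proof -
    have "(\<Sum>i\<in>UNIV. \<Sum>j\<in>UNIV. (1/2 * (\<Sum>l\<in>UNIV. gi m l * (dg i j l + dg j i l - dg l i j))) * T i * T j)
        = (\<Sum>i\<in>UNIV. \<Sum>j\<in>UNIV. \<Sum>l\<in>UNIV. 1/2 * (gi m l * ((dg i j l + dg j i l - dg l i j) * T i * T j)))"
      by (simp add: sum_distrib_left sum_distrib_right mult_ac)
    also have "\<dots> = (\<Sum>l\<in>UNIV. \<Sum>i\<in>UNIV. \<Sum>j\<in>UNIV. 1/2 * (gi m l * ((dg i j l + dg j i l - dg l i j) * T i * T j)))"
      by (subst sum.swap, subst (2) sum.swap, simp)
    also have "\<dots> = 1/2 * (\<Sum>l\<in>UNIV. gi m l * C l)"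
      unfolding C_def by (simp add: sum_distrib_left)
    finally show ?thesis using geo[of m] by simp
  qed
  have gA: "(\<Sum>m\<in>UNIV. g k m * A m) = - (1/2 * C k)" for k
  proof -
    have "(\<Sum>m\<in>UNIV. g k m * A m) = - (1/2 * (\<Sum>m\<in>UNIV. \<Sum>l\<in>UNIV. g k m * gi m l * C l))"
      unfolding Am by (simp add: sum_distrib_left sum_negf mult_ac)
    also have "(\<Sum>m\<in>UNIV. \<Sum>l\<in>UNIV. g k m * gi m l * C l) = (\<Sum>l\<in>UNIV. (\<Sum>m\<in>UNIV. g k m * gi m l) * C l)"
      by (subst sum.swap) (simp add: sum_distrib_right)
    also have "\<dots> = (\<Sum>l\<in>UNIV. (if k = l then C k else 0))" unfolding inv by (rule sum.cong) auto
    also have "\<dots> = C k" by simp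
    finally show ?thesis .
  qed
  have R: "(\<Sum>k\<in>UNIV. \<Sum>m\<in>UNIV. X k * g k m * A m) = - (1/2 * (\<Sum>k\<in>UNIV. X k * C k))"
  proof -
    have "(\<Sum>k\<in>UNIV. \<Sum>m\<in>UNIV. X k * g k m * A m) = (\<Sum>k\<in>UNIV. X k * (\<Sum>m\<in>UNIV. g k m * A m))"
      by (simp add: sum_distrib_left mult_ac)
    also have "\<dots> = - (1/2 * (\<Sum>k\<in>UNIV. X k * C k))"
      unfolding gA by (simp add: sum_distrib_left sum_negf mult_ac)
    finally show ?thesis .
  qed
  have c1: "(\<Sum>k\<in>UNIV. X k * (\<Sum>i\<in>UNIV. \<Sum>j\<in>UNIV. dg i j k * T i * T j)) = P"
  proof -
    have "(\<Sum>k\<in>UNIV. X k * (\<Sum>i\<in>UNIV. \<Sum>j\<in>UNIV. dg i j k * T i * T j))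
        = (\<Sum>k\<in>UNIV. \<Sum>j\<in>UNIV. \<Sum>i\<in>UNIV. X k * (T i * dg i k j) * T j)"
      by (subst (2) sum.swap) (simp add: sum_distrib_left dsym mult_ac)
    also have "\<dots> = P" unfolding P_def by (simp add: sum_distrib_left sum_distrib_right mult_ac)
    finally show ?thesis .
  qed
  have c2: "(\<Sum>k\<in>UNIV. X k * (\<Sum>i\<in>UNIV. \<Sum>j\<in>UNIV. dg j i k * T i * T j)) = P"
  proof -
    have "(\<Sum>i\<in>UNIV. \<Sum>j\<in>UNIV. dg j i k * T i * T j) = (\<Sum>i\<in>UNIV. \<Sum>j\<in>UNIV. dg i j k * T i * T j)" for k
      by (subst sum.swap) (simp add: mult_ac)
    then show ?thesis using c1 by simp
  qed
  have c3: "(\<Sum>k\<in>UNIV. X k * (\<Sum>i\<in>UNIV. \<Sum>j\<in>UNIV. dg k i j * T i * T j)) = Xi"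
  proof -
    have "Xi = (\<Sum>a\<in>UNIV. \<Sum>b\<in>UNIV. \<Sum>c\<in>UNIV. X c * dg c a b * T a * T b)"
      unfolding Xi_def by (simp add: sum_distrib_left sum_distrib_right mult_ac)
    also have "\<dots> = (\<Sum>a\<in>UNIV. \<Sum>c\<in>UNIV. \<Sum>b\<in>UNIV. X c * dg c a b * T a * T b)"
      by (rule sum.cong[OF refl], rule sum.swap)
    also have "\<dots> = (\<Sum>c\<in>UNIV. \<Sum>a\<in>UNIV. \<Sum>b\<in>UNIV. X c * dg c a b * T a * T b)"
      by (rule sum.swap)
    also have "\<dots> = (\<Sum>k\<in>UNIV. X k * (\<Sum>i\<in>UNIV. \<Sum>j\<in>UNIV. dg k i j * T i * T j))"
      by (simp add: sum_distrib_left mult_ac)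
    finally show ?thesis by simp
  qed
  have XC: "(\<Sum>k\<in>UNIV. X k * C k) = 2 * P - Xi"
  proof -
    have "(\<Sum>k\<in>UNIV. X k * C k) = (\<Sum>k\<in>UNIV. X k * (\<Sum>i\<in>UNIV. \<Sum>j\<in>UNIV. dg i j k * T i * T j))
       + (\<Sum>k\<in>UNIV. X k * (\<Sum>i\<in>UNIV. \<Sum>j\<in>UNIV. dg j i k * T i * T j))
       - (\<Sum>k\<in>UNIV. X k * (\<Sum>i\<in>UNIV. \<Sum>j\<in>UNIV. dg k i j * T i * T j))"
      unfolding C_def by (simp add: algebra_simps sum.distrib sum_subtractf sum_distrib_left)
    then show ?thesis using c1 c2 c3 by simp
  qed
  have "(\<Sum>k\<in>UNIV. \<Sum>m\<in>UNIV. X' k * g k m * T m + X k * (\<Sum>i\<in>UNIV. T i * dg i k m) * T m + X k * g k m * A m)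
      = S1 + P + (\<Sum>k\<in>UNIV. \<Sum>m\<in>UNIV. X k * g k m * A m)"
    unfolding S1_def P_def by (simp add: sum.distrib)
  also have "\<dots> = S1 + Xi / 2" unfolding R XC by (simp add: right_diff_distrib)
  also have "\<dots> = 0" using dN' by simp
  finally show ?thesis .
qed



lemma sym_form:
  fixes g :: "real^'n^'n"
  assumes "transpose g = g"
  shows "u \<bullet> (g *v v) = v \<bullet> (g *v u)"
proof -
  have "u \<bullet> (g *v v) = (u v* g) \<bullet> v" by (simp add: dot_lmul_matrix)
  also have "u v* g = g *v u" using vector_transpose_matrix[of u g] assms by simp
  finally show ?thesis by (simp add: inner_commute)
qed

lemma lor_nonorth:
  fixes g :: "real^'n^'n"
  assumes L: "lorentzian_form g" and X: "X \<bullet> (g *v X) < 0"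
    and T: "T \<bullet> (g *v T) = 0" "T \<noteq> 0"
  shows "X \<bullet> (g *v T) \<noteq> 0"
proof
  assume XT: "X \<bullet> (g *v T) = 0"
  have sym: "transpose g = g" and det: "det g \<noteq> 0"
    and neg: "\<And>S. subspace S \<Longrightarrow> (\<forall>v\<in>S. v \<noteq> 0 \<longrightarrow> v \<bullet> (g *v v) < 0) \<Longrightarrow> dim S \<le> 1"
    using L unfolding lorentzian_form_def by blast+
  have sf: "\<And>u v. u \<bullet> (g *v v) = v \<bullet> (g *v u)" using sym_form[OF sym] .
  have inj: "inj ((*v) g)" using det invertible_det_nz inj_matrix_vector_mult by blast
  define gX where "gX = g *v X"
  define gT where "gT = g *v T"
  have gX0: "gX \<noteq> 0" using X unfolding gX_def by auto
  define \<alpha> where "\<alpha> = (gT \<bullet> gX) / (gX \<bullet> gX)"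
  define z where "z = gT - \<alpha> *\<^sub>R gX"
  have gXz: "gX \<bullet> z = 0"
    using gX0 unfolding z_def \<alpha>_def by (simp add: inner_diff_right inner_commute)
  have z0: "z \<noteq> 0"
  proof
    assume "z = 0"
    then have "g *v T = g *v (\<alpha> *\<^sub>R X)"
      unfolding z_def gT_def gX_def by (simp add: matrix_vector_mult_scaleR)
    then have TX: "T = \<alpha> *\<^sub>R X" using inj by (meson injD)
    then have "\<alpha> * \<alpha> * (X \<bullet> (g *v X)) = 0" using T(1) by (simp add: matrix_vector_mult_scaleR)
    then have "\<alpha> = 0" using X by simp
    then show False using TX T(2) by simp
  qed
  have zgT: "z \<bullet> (g *v T) = z \<bullet> z"
  proof -
    have "gT = z + \<alpha> *\<^sub>R gX" unfolding z_def by simp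
    then have "z \<bullet> gT = z \<bullet> z + \<alpha> * (z \<bullet> gX)" by (simp add: inner_add_right)
    then show ?thesis using gXz by (simp add: gT_def inner_commute)
  qed
  define q where "q = z \<bullet> (g *v z)"
  define \<epsilon> where "\<epsilon> = (z \<bullet> z) / (\<bar>q\<bar> + 1)"
  have zz: "z \<bullet> z > 0" using z0 by simp
  have eps: "\<epsilon> > 0" using zz unfolding \<epsilon>_def by (simp add: add_pos_nonneg)
  have epsq: "\<epsilon> * q < z \<bullet> z"
  proof -
    have "\<epsilon> * q \<le> \<epsilon> * \<bar>q\<bar>" using eps by (simp add: mult_left_mono)
    also have "\<dots> < \<epsilon> * (\<bar>q\<bar> + 1)" using eps by simp
    also have "\<dots> = z \<bullet> z" unfolding \<epsilon>_def by (simp add: add_pos_nonneg)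
    finally show ?thesis .
  qed
  define w where "w = T - \<epsilon> *\<^sub>R z"
  have wgX: "w \<bullet> (g *v X) = 0"
  proof -
    have "T \<bullet> (g *v X) = 0" using XT sf by metis
    moreover have "z \<bullet> (g *v X) = 0" using gXz unfolding gX_def by (simp add: inner_commute)
    ultimately show ?thesis unfolding w_def by (simp add: inner_diff_left)
  qed
  have Xgw: "X \<bullet> (g *v w) = 0" using wgX sf by metis
  have wgw: "w \<bullet> (g *v w) < 0"
  proof -
    have Tgz: "T \<bullet> (g *v z) = z \<bullet> z" using zgT sf by metis
    have "w \<bullet> (g *v w) = T \<bullet> (g *v T) - \<epsilon> * (T \<bullet> (g *v z)) - \<epsilon> * (z \<bullet> (g *v T)) + \<epsilon> * \<epsilon> * q"
      unfolding w_def q_def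
      by (simp add: matrix_vector_mult_diff_distrib matrix_vector_mult_scaleR inner_diff_left inner_diff_right algebra_simps)
    also have "\<dots> = \<epsilon> * (\<epsilon> * q - 2 * (z \<bullet> z))" using T(1) Tgz zgT by (simp add: algebra_simps)
    also have "\<dots> < 0"
    proof (rule mult_pos_neg[OF eps])
      show "\<epsilon> * q - 2 * (z \<bullet> z) < 0" using epsq zz by linarith
    qed
    finally show ?thesis .
  qed
  have w0: "w \<noteq> 0" using wgw by auto
  have wX: "w \<notin> span {X}"
  proof
    assume "w \<in> span {X}"
    then obtain c where "w = c *\<^sub>R X" by (auto simp: span_singleton)
    then have "c * (X \<bullet> (g *v X)) = 0" using wgX by (simp add: matrix_vector_mult_scaleR)
    then have "c = 0" using X by simp
    then show False using w0 \<open>w = c *\<^sub>R X\<close> by simp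
  qed
  have X0: "X \<noteq> 0" using X by auto
  have indX: "independent {X}"
    using independent_insertI[of X "{}"] X0 by (simp add: span_empty)
  have ind: "independent {w, X}" using independent_insertI[OF wX indX] .
  have neX: "w \<noteq> X" using wX span_base[of X "{X}"] by auto
  have "dim (span {w, X}) = 2"
    using dim_span_eq_card_independent[OF ind] neX by simp
  moreover have "dim (span {w, X}) \<le> 1"
  proof (rule neg)
    show "subspace (span {w, X})" by (rule subspace_span)
    show "\<forall>v\<in>span {w, X}. v \<noteq> 0 \<longrightarrow> v \<bullet> (g *v v) < 0"
    proof (intro ballI impI)
      fix v assume v: "v \<in> span {w, X}" "v \<noteq> 0"
      then obtain a where "v - a *\<^sub>R w \<in> span {X}" using span_breakdown_eq by blast
      then obtain b where vab: "v - a *\<^sub>R w = b *\<^sub>R X" by (auto simp: span_singleton)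
      then have vab': "v = a *\<^sub>R w + b *\<^sub>R X" by (simp add: algebra_simps)
      have "v \<bullet> (g *v v) = a * a * (w \<bullet> (g *v w)) + b * b * (X \<bullet> (g *v X))
            + a * b * (w \<bullet> (g *v X)) + a * b * (X \<bullet> (g *v w))"
        unfolding vab' by (simp add: matrix_vector_right_distrib matrix_vector_mult_scaleR
            inner_add_left inner_add_right algebra_simps)
      also have "\<dots> = (a * a) * (w \<bullet> (g *v w)) + (b * b) * (X \<bullet> (g *v X))"
        using wgX Xgw by simp
      finally have eq: "v \<bullet> (g *v v) = (a * a) * (w \<bullet> (g *v w)) + (b * b) * (X \<bullet> (g *v X))" .
      have "a \<noteq> 0 \<or> b \<noteq> 0" using v(2) vab' by auto
      then show "v \<bullet> (g *v v) < 0"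
      proof
        assume "a \<noteq> 0"
        then have "a * a > 0" using not_real_square_gt_zero by blast
        then have "(a * a) * (w \<bullet> (g *v w)) < 0" using wgw by (rule mult_pos_neg)
        moreover have "(b * b) * (X \<bullet> (g *v X)) \<le> 0" using X by (simp add: mult_nonneg_nonpos)
        ultimately show ?thesis using eq by linarith
      next
        assume "b \<noteq> 0"
        then have "b * b > 0" using not_real_square_gt_zero by blast
        then have "(b * b) * (X \<bullet> (g *v X)) < 0" using X by (rule mult_pos_neg)
        moreover have "(a * a) * (w \<bullet> (g *v w)) \<le> 0" using wgw by (simp add: mult_nonneg_nonpos)
        ultimately show ?thesis using eq by linarith
      qed
    qed
  qed
  ultimately show False by simp
qed



lemma basis_e1: "((1::real), (0::real)) \<in> Basis" by (simp add: Basis_prod_def)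
lemma basis_e2: "((0::real), (1::real)) \<in> Basis" by (simp add: Basis_prod_def)

lemma axis_Basis: "axis i (1::real) \<in> Basis"
  by (auto simp: Basis_vec_def)

lemma axis2_Basis: "axis i (axis j (1::real)) \<in> (Basis :: (real^'n^'m) set)"
  by (auto simp: Basis_vec_def axis_Basis)

lemma sum_Basis_vec: "(\<Sum>b\<in>(Basis :: (real^'n) set). f b) = (\<Sum>i\<in>UNIV. f (axis i 1))"
proof -
  have "(Basis :: (real^'n) set) = (\<lambda>i. axis i 1) ` UNIV" by (auto simp: Basis_vec_def)
  moreover have "inj (\<lambda>i::'n. axis i (1::real))" by (auto simp: inj_def axis_eq_axis)
  moreover have "sum f ((\<lambda>i. axis i 1) ` UNIV) = sum (f \<circ> (\<lambda>i::'n. axis i (1::real))) UNIV"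
    by (rule sum.reindex) (use \<open>inj (\<lambda>i::'n. axis i (1::real))\<close> in simp)
  ultimately show ?thesis by (simp add: o_def)
qed

lemma sm_coord:
  assumes "smooth_family_on A W F" "c \<in> A"
  shows "sm (W \<inter> F -` fst c) (\<lambda>q. snd c (F q) $ k)"
proof -
  have "smooth_map_on (W \<inter> F -` fst c) (snd c \<circ> F)" using assms unfolding smooth_family_on_def by blast
  from sm_of_smooth[OF this axis_Basis[of k]]
  show ?thesis by (simp add: inner_axis o_def)
qed

lemma sm_metric:
  assumes "lorentzian_manifold A G" "c \<in> A"
  shows "sm (snd c ` fst c) (\<lambda>y. G c y $ i $ j)"
proof -
  have "smooth_map_on (snd c ` fst c) (G c)"
    using assms unfolding lorentzian_manifold_def lorentzian_metric_def by blast
  from sm_of_smooth[OF this axis2_Basis[of i j]]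
  show ?thesis by (simp add: inner_axis)
qed

lemma sm_chain:
  fixes f :: "real^'n \<Rightarrow> real"
  assumes "sm S f" "\<gamma> t0 \<in> S" "(\<gamma> has_vector_derivative v) (at t0)"
  shows "((\<lambda>t. f (\<gamma> t)) has_real_derivative (\<Sum>i\<in>UNIV. v $ i * pd [axis i 1] f (\<gamma> t0))) (at t0)"
proof -
  have f: "(f has_derivative (\<lambda>h. \<Sum>b\<in>Basis. (h \<bullet> b) * pd [b] f (\<gamma> t0))) (at (\<gamma> t0))"
    using sm_C1[OF assms(1,2)] .
  have g: "(\<gamma> has_derivative (\<lambda>h. h *\<^sub>R v)) (at t0)"
    using assms(3) unfolding has_vector_derivative_def .
  have "((f \<circ> \<gamma>) has_derivative ((\<lambda>h. \<Sum>b\<in>Basis. (h \<bullet> b) * pd [b] f (\<gamma> t0)) \<circ> (\<lambda>h. h *\<^sub>R v))) (at t0)"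
    using diff_chain_at[OF g f] .
  moreover have "((\<lambda>h. \<Sum>b\<in>Basis. (h \<bullet> b) * pd [b] f (\<gamma> t0)) \<circ> (\<lambda>h. h *\<^sub>R v))
      = (*) (\<Sum>i\<in>UNIV. v $ i * pd [axis i 1] f (\<gamma> t0))"
    by (rule ext) (simp add: sum_Basis_vec inner_axis sum_distrib_left mult_ac)
  ultimately show ?thesis unfolding has_field_derivative_def o_def by simp
qed

lemma vec_deriv_comp:
  fixes \<gamma> :: "real \<Rightarrow> real^'n"
  assumes "\<And>i. ((\<lambda>t. \<gamma> t $ i) has_real_derivative v $ i) (at t0)"
  shows "(\<gamma> has_vector_derivative v) (at t0)"
  unfolding has_vector_derivative_def
proof (subst has_derivative_componentwise_within, intro ballI)
  fix b :: "real^'n" assume "b \<in> Basis"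
  then obtain i where b: "b = axis i 1" unfolding Basis_vec_def by auto
  have "((\<lambda>t. \<gamma> t $ i) has_derivative (*) (v $ i)) (at t0)"
    using assms[of i] unfolding has_field_derivative_def .
  moreover have "(*) (v $ i) = (\<lambda>h. (h *\<^sub>R v) \<bullet> b)" by (rule ext) (simp add: b inner_axis)
  ultimately show "((\<lambda>t. \<gamma> t \<bullet> b) has_derivative (\<lambda>h. (h *\<^sub>R v) \<bullet> b)) (at t0)"
    by (simp add: b inner_axis)
qed

lemma vec_deriv_nth:
  fixes \<gamma> :: "real \<Rightarrow> real^'n"
  assumes "(\<gamma> has_vector_derivative v) (at t0)"
  shows "((\<lambda>t. \<gamma> t $ i) has_real_derivative v $ i) (at t0)"
proof -
  have "(\<gamma> has_derivative (\<lambda>h. h *\<^sub>R v)) (at t0)" using assms by (simp add: has_vector_derivative_def)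
  then have "\<forall>b\<in>Basis. ((\<lambda>t. \<gamma> t \<bullet> b) has_derivative (\<lambda>h. (h *\<^sub>R v) \<bullet> b)) (at t0)"
    by (rule has_derivative_componentwise_within[THEN iffD1])
  then have 1: "((\<lambda>t. \<gamma> t \<bullet> axis i 1) has_derivative (\<lambda>h. (h *\<^sub>R v) \<bullet> axis i 1)) (at t0)"
    using axis_Basis[of i] by (rule bspec)
  have 2: "(\<lambda>t. \<gamma> t \<bullet> axis i 1) = (\<lambda>t. \<gamma> t $ i)" by (rule ext) (simp only: inner_axis real_inner_1_right)
  have 3: "(\<lambda>h. (h *\<^sub>R v) \<bullet> axis i 1) = (*) (v $ i)"
    by (rule ext) (simp add: inner_axis mult.commute)
  show ?thesis using 1 unfolding has_field_derivative_def 2 3 .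
qed

lemma DERIV3:
  fixes a b c :: "real \<Rightarrow> real"
  assumes "(a has_real_derivative a') (at s)" "(b has_real_derivative b') (at s)" "(c has_real_derivative c') (at s)"
  shows "((\<lambda>t. a t * b t * c t) has_real_derivative (a' * b s * c s + a s * b' * c s + a s * b s * c')) (at s)"
  using assms by (auto intro!: derivative_eq_intros simp: algebra_simps)

lemma inner_mat: "u \<bullet> ((M::real^'n^'n) *v v) = (\<Sum>k\<in>UNIV. \<Sum>m\<in>UNIV. u $ k * M $ k $ m * v $ m)"
  by (simp add: inner_vec_def matrix_vector_mult_def sum_distrib_left mult_ac)

lemma pd_cong_open:
  assumes "open S" "x \<in> S" "\<And>y. y \<in> S \<Longrightarrow> f y = g y"
  shows "pd [b] f x = pd [b] g x"
proof -
  define V where "V = (\<lambda>t::real. x + t *\<^sub>R b) -` S"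
  have V: "open V" unfolding V_def
    by (rule continuous_open_vimage[OF assms(1)]) (auto intro!: continuous_intros)
  have V0: "0 \<in> V" using assms(2) by (simp add: V_def)
  have eq: "\<And>t. t \<in> V \<Longrightarrow> f (x + t *\<^sub>R b) = g (x + t *\<^sub>R b)" using assms(3) by (simp add: V_def)
  have "\<And>D. ((\<lambda>t. f (x + t *\<^sub>R b)) has_real_derivative D) (at 0) \<longleftrightarrow> ((\<lambda>t. g (x + t *\<^sub>R b)) has_real_derivative D) (at 0)"
  proof
    fix D assume "((\<lambda>t. f (x + t *\<^sub>R b)) has_real_derivative D) (at 0)"
    then show "((\<lambda>t. g (x + t *\<^sub>R b)) has_real_derivative D) (at 0)"
      by (rule has_field_derivative_transform_within_open[OF _ V V0]) (rule eq)
  next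
    fix D assume "((\<lambda>t. g (x + t *\<^sub>R b)) has_real_derivative D) (at 0)"
    then show "((\<lambda>t. f (x + t *\<^sub>R b)) has_real_derivative D) (at 0)"
      by (rule has_field_derivative_transform_within_open[OF _ V V0]) (rule eq[symmetric])
  qed
  then show ?thesis by (simp add: deriv_def)
qed



lemma Q_deriv:
  fixes A :: "('m::{t2_space, second_countable_topology}, 'n::finite) chart set"
    and G :: "('m, 'n) chart \<Rightarrow> real^'n \<Rightarrow> real^'n^'n"
    and F :: "real \<times> real \<Rightarrow> 'm"
  assumes LM: "lorentzian_manifold A G" and cA: "c \<in> A"
    and NC: "null_connecting_family A G J I F"
    and WJI: "J \<times> I \<subseteq> W" and SF: "smooth_family_on A W F"
    and s: "s \<in> I" and Fs: "F (0, s) \<in> fst c"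
  shows "((\<lambda>\<sigma>. jacobi_field_coord c F \<sigma> \<bullet> (G c (snd c (F (0, \<sigma>))) *v coord_partial c F [(0,1)] (0, \<sigma>)))
           has_real_derivative 0) (at s)"
proof -
  define U where "U = W \<inter> F -` fst c"
  define xk where "xk k = (\<lambda>q. snd c (F q) $ k)" for k
  have sU: "sm U (xk k)" for k unfolding U_def xk_def using sm_coord[OF SF cA] .
  have oU: "open U" using sm_open[OF sU] .
  have J0: "0 \<in> J" and oJ: "open J" using NC unfolding null_connecting_family_def by auto
  define p where "p = ((0::real), s)"
  have pU: "p \<in> U" using WJI J0 s Fs unfolding U_def p_def by auto
  define e1 where "e1 = ((1::real), (0::real))"
  define e2 where "e2 = ((0::real), (1::real))"
  have e1B: "e1 \<in> Basis" and e2B: "e2 \<in> Basis" unfolding e1_def e2_def by (rule basis_e1, rule basis_e2)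
  have cp: "coord_partial c F bs q $ k = pd bs (xk k) q" for bs q k
    by (simp add: coord_partial_def xk_def)
  have Ds: "((\<lambda>\<sigma>. pd bs (xk k) (0, \<sigma>)) has_real_derivative pd (e2 # bs) (xk k) p) (at s)"
    if "set bs \<subseteq> Basis" for bs k
  proof -
    have "(0, 0) + s *\<^sub>R e2 \<in> U" using pU by (simp add: p_def e2_def)
    from sm_DERIV[OF sU that e2B this] show ?thesis by (simp add: e2_def p_def)
  qed
  have Dl: "((\<lambda>l. pd bs (xk k) (l, s)) has_real_derivative pd (e1 # bs) (xk k) p) (at 0)"
    if "set bs \<subseteq> Basis" for bs k
  proof -
    have "p + 0 *\<^sub>R e1 \<in> U" using pU by simp
    from sm_DERIV[OF sU that e1B this] show ?thesis by (simp add: e1_def p_def)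
  qed
  define xp where "xp = snd c (F p)"
  define gM where "gM = G c xp"
  define g where "g k m = gM $ k $ m" for k m
  define gi where "gi k m = matrix_inv gM $ k $ m" for k m
  define dg where "dg i k m = pd [axis i 1] (\<lambda>y. G c y $ k $ m) xp" for i k m
  define Tv where "Tv k = pd [e2] (xk k) p" for k
  define Xv where "Xv k = pd [e1] (xk k) p" for k
  define X' where "X' k = pd [e2, e1] (xk k) p" for k
  define T' where "T' k = pd [e1, e2] (xk k) p" for k
  define Av where "Av k = pd [e2, e2] (xk k) p" for k
  have xpS: "xp \<in> snd c ` fst c" using Fs by (simp add: xp_def p_def)
  have vs: "((\<lambda>\<sigma>. snd c (F (0, \<sigma>))) has_vector_derivative (\<chi> k. Tv k)) (at s)"
  proof (rule vec_deriv_comp)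
    fix k
    show "((\<lambda>\<sigma>. snd c (F (0, \<sigma>)) $ k) has_real_derivative (\<chi> k. Tv k) $ k) (at s)"
      using Ds[of "[]" k] by (simp add: xk_def Tv_def)
  qed
  have vl: "((\<lambda>l. snd c (F (l, s))) has_vector_derivative (\<chi> k. Xv k)) (at 0)"
  proof (rule vec_deriv_comp)
    fix k
    show "((\<lambda>l. snd c (F (l, s)) $ k) has_real_derivative (\<chi> k. Xv k) $ k) (at 0)"
      using Dl[of "[]" k] by (simp add: xk_def Xv_def)
  qed
  have gs: "((\<lambda>\<sigma>. G c (snd c (F (0, \<sigma>))) $ k $ m) has_real_derivative (\<Sum>i\<in>UNIV. Tv i * dg i k m)) (at s)" for k m
    using sm_chain[OF sm_metric[OF LM cA, of k m], of "\<lambda>\<sigma>. snd c (F (0, \<sigma>))" s, OF _ vs] xpS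
    by (simp add: xp_def p_def dg_def)
  have gl: "((\<lambda>l. G c (snd c (F (l, s))) $ k $ m) has_real_derivative (\<Sum>i\<in>UNIV. Xv i * dg i k m)) (at 0)" for k m
    using sm_chain[OF sm_metric[OF LM cA, of k m], of "\<lambda>l. snd c (F (l, s))" 0, OF _ vl] xpS
    by (simp add: xp_def p_def dg_def)
  have Qsum: "jacobi_field_coord c F \<sigma> \<bullet> (G c (snd c (F (0, \<sigma>))) *v coord_partial c F [(0,1)] (0, \<sigma>))
     = (\<Sum>k\<in>UNIV. \<Sum>m\<in>UNIV. pd [e1] (xk k) (0, \<sigma>) * G c (snd c (F (0, \<sigma>))) $ k $ m * pd [e2] (xk m) (0, \<sigma>))" for \<sigma>
    unfolding inner_mat jacobi_field_coord_def cp e1_def e2_def ..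
  have DQ: "((\<lambda>\<sigma>. jacobi_field_coord c F \<sigma> \<bullet> (G c (snd c (F (0, \<sigma>))) *v coord_partial c F [(0,1)] (0, \<sigma>)))
      has_real_derivative (\<Sum>k\<in>UNIV. \<Sum>m\<in>UNIV. X' k * g k m * Tv m + Xv k * (\<Sum>i\<in>UNIV. Tv i * dg i k m) * Tv m + Xv k * g k m * Av m)) (at s)"
    unfolding Qsum
  proof (intro DERIV_sum)
    fix k m
    have a: "((\<lambda>\<sigma>. pd [e1] (xk k) (0, \<sigma>)) has_real_derivative X' k) (at s)"
      using Ds[of "[e1]" k] e1B by (simp add: X'_def)
    have c: "((\<lambda>\<sigma>. pd [e2] (xk m) (0, \<sigma>)) has_real_derivative Av m) (at s)"
      using Ds[of "[e2]" m] e2B by (simp add: Av_def)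
    have a0: "pd [e1] (xk k) (0, s) = Xv k" by (simp add: Xv_def p_def)
    have c0: "pd [e2] (xk m) (0, s) = Tv m" by (simp add: Tv_def p_def)
    have b0: "G c (snd c (F (0, s))) $ k $ m = g k m" by (simp add: g_def gM_def xp_def p_def)
    show "((\<lambda>\<sigma>. pd [e1] (xk k) (0, \<sigma>) * G c (snd c (F (0, \<sigma>))) $ k $ m * pd [e2] (xk m) (0, \<sigma>))
       has_real_derivative X' k * g k m * Tv m + Xv k * (\<Sum>i\<in>UNIV. Tv i * dg i k m) * Tv m + Xv k * g k m * Av m) (at s)"
      using DERIV3[OF a gs[of k m] c] unfolding a0 b0 c0 .
  qed
  \<comment> \<open>Derivative of N (which vanishes identically)\<close>
  have Nsum: "coord_partial c F [(0,1)] (l, s) \<bullet> (G c (snd c (F (l, s))) *v coord_partial c F [(0,1)] (l, s))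
     = (\<Sum>k\<in>UNIV. \<Sum>m\<in>UNIV. pd [e2] (xk k) (l, s) * G c (snd c (F (l, s))) $ k $ m * pd [e2] (xk m) (l, s))" for l
    unfolding inner_mat cp e2_def ..
  have DN: "((\<lambda>l. coord_partial c F [(0,1)] (l, s) \<bullet> (G c (snd c (F (l, s))) *v coord_partial c F [(0,1)] (l, s)))
      has_real_derivative (\<Sum>k\<in>UNIV. \<Sum>m\<in>UNIV. T' k * g k m * Tv m + Tv k * (\<Sum>i\<in>UNIV. Xv i * dg i k m) * Tv m + Tv k * g k m * T' m)) (at 0)"
    unfolding Nsum
  proof (intro DERIV_sum)
    fix k m
    have a: "((\<lambda>l. pd [e2] (xk k) (l, s)) has_real_derivative T' k) (at 0)"
      using Dl[of "[e2]" k] e2B by (simp add: T'_def)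
    have c: "((\<lambda>l. pd [e2] (xk m) (l, s)) has_real_derivative T' m) (at 0)"
      using Dl[of "[e2]" m] e2B by (simp add: T'_def)
    have a0: "pd [e2] (xk k) (0, s) = Tv k" by (simp add: Tv_def p_def)
    have c0: "pd [e2] (xk m) (0, s) = Tv m" by (simp add: Tv_def p_def)
    have b0: "G c (snd c (F (0, s))) $ k $ m = g k m" by (simp add: g_def gM_def xp_def p_def)
    show "((\<lambda>l. pd [e2] (xk k) (l, s) * G c (snd c (F (l, s))) $ k $ m * pd [e2] (xk m) (l, s))
       has_real_derivative T' k * g k m * Tv m + Tv k * (\<Sum>i\<in>UNIV. Xv i * dg i k m) * Tv m + Tv k * g k m * T' m) (at 0)"
      using DERIV3[OF a gl[of k m] c] unfolding a0 b0 c0 .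
  qed
  have DN0: "((\<lambda>l. coord_partial c F [(0,1)] (l, s) \<bullet> (G c (snd c (F (l, s))) *v coord_partial c F [(0,1)] (l, s)))
      has_real_derivative 0) (at 0)"
  proof -
    define V where "V = J \<inter> (\<lambda>l. (l, s)) -` U"
    have oV: "open V" unfolding V_def
      by (intro open_Int oJ continuous_open_vimage[OF oU]) (auto intro!: continuous_intros)
    have V0: "0 \<in> V" using J0 pU by (simp add: V_def p_def)
    have "coord_partial c F [(0,1)] (l, s) \<bullet> (G c (snd c (F (l, s))) *v coord_partial c F [(0,1)] (l, s)) = 0"
      if "l \<in> V" for l
    proof -
      have "l \<in> J" "F (l, s) \<in> fst c" using that by (auto simp: V_def U_def)
      then have "null_geodesic_at A G F (l, s)" using NC s unfolding null_connecting_family_def by blast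
      then show ?thesis using cA \<open>F (l, s) \<in> fst c\<close> unfolding null_geodesic_at_def Let_def by blast
    qed
    then show ?thesis
      by (intro has_field_derivative_transform_within_open[OF DERIV_const oV V0]) auto
  qed
  have dN0: "(\<Sum>k\<in>UNIV. \<Sum>m\<in>UNIV. T' k * g k m * Tv m + Tv k * (\<Sum>i\<in>UNIV. Xv i * dg i k m) * Tv m + Tv k * g k m * T' m) = 0"
    using DERIV_unique[OF DN DN0] .
  have XT': "X' k = T' k" for k
    unfolding X'_def T'_def
  proof (rule mixed_sym[OF oU pU, of e1 "xk k" "pd [e1] (xk k)" e2 "pd [e2] (xk k)"])
    fix y a assume "y + a *\<^sub>R e1 \<in> U"
    from sm_DERIV[OF sU _ e1B this, of "[]"]
    show "((\<lambda>t. xk k (y + t *\<^sub>R e1)) has_real_derivative pd [e1] (xk k) (y + a *\<^sub>R e1)) (at a)" by simp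
  next
    fix y a assume "y + a *\<^sub>R e2 \<in> U"
    from sm_DERIV[OF sU _ e2B this, of "[]"]
    show "((\<lambda>t. xk k (y + t *\<^sub>R e2)) has_real_derivative pd [e2] (xk k) (y + a *\<^sub>R e2)) (at a)" by simp
  next
    fix y a assume "y + a *\<^sub>R e2 \<in> U"
    from sm_DERIV[OF sU _ e2B this, of "[e1]"] e1B
    show "((\<lambda>t. pd [e1] (xk k) (y + t *\<^sub>R e2)) has_real_derivative pd [e2, e1] (xk k) (y + a *\<^sub>R e2)) (at a)" by simp
  next
    fix y a assume "y + a *\<^sub>R e1 \<in> U"
    from sm_DERIV[OF sU _ e1B this, of "[e2]"] e2B
    show "((\<lambda>t. pd [e2] (xk k) (y + t *\<^sub>R e1)) has_real_derivative pd [e1, e2] (xk k) (y + a *\<^sub>R e1)) (at a)" by simp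
  next
    show "continuous (at p) (pd [e2, e1] (xk k))"
      using sm_cont[OF sU, of "[e2, e1]"] e1B e2B oU pU continuous_on_eq_continuous_at by auto
    show "continuous (at p) (pd [e1, e2] (xk k))"
      using sm_cont[OF sU, of "[e1, e2]"] e1B e2B oU pU continuous_on_eq_continuous_at by auto
  qed
  have "null_geodesic_at A G F p" using NC s J0 unfolding null_connecting_family_def p_def by blast
  then have geq: "\<forall>k. coord_partial c F [(0,1),(0,1)] p $ k + (\<Sum>i\<in>UNIV. \<Sum>j\<in>UNIV.
      christoffel (G c) xp k i j * coord_partial c F [(0,1)] p $ i * coord_partial c F [(0,1)] p $ j) = 0"
    using cA Fs unfolding null_geodesic_at_def Let_def p_def xp_def by blast
  have geo: "Av m = - (\<Sum>i\<in>UNIV. \<Sum>j\<in>UNIV. (1/2 * (\<Sum>l\<in>UNIV. gi m l * (dg i j l + dg j i l - dg l i j))) * Tv i * Tv j)" for m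
  proof -
    have "Av m + (\<Sum>i\<in>UNIV. \<Sum>j\<in>UNIV. (1/2 * (\<Sum>l\<in>UNIV. gi m l * (dg i j l + dg j i l - dg l i j))) * Tv i * Tv j) = 0"
      using geq[rule_format, of m]
      by (simp add: cp christoffel_def Av_def Tv_def gi_def dg_def gM_def e2_def)
    then show ?thesis by linarith
  qed
  have lf: "lorentzian_form (G c y)" if "y \<in> snd c ` fst c" for y
    using LM cA that unfolding lorentzian_manifold_def lorentzian_metric_def by blast
  have symy: "G c y $ k $ m = G c y $ m $ k" if "y \<in> snd c ` fst c" for y k m
  proof -
    have "transpose (G c y) = G c y" using lf[OF that] unfolding lorentzian_form_def by blast
    then have "transpose (G c y) $ m $ k = G c y $ m $ k" by simp
    then show ?thesis by (simp add: transpose_def)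
  qed
  have sym: "g k m = g m k" for k m unfolding g_def gM_def using symy[OF xpS] .
  have oS: "open (snd c ` fst c)" using sm_open[OF sm_metric[OF LM cA]] .
  have dsym: "dg i k m = dg i m k" for i k m
    unfolding dg_def by (rule pd_cong_open[OF oS xpS]) (rule symy)
  have inv: "(\<Sum>m\<in>UNIV. g k m * gi m l) = (if k = l then 1 else 0)" for k l
  proof -
    have "det gM \<noteq> 0" using lf[OF xpS] unfolding lorentzian_form_def gM_def by blast
    then have "invertible gM" using invertible_det_nz by blast
    then have "\<exists>A'. gM ** A' = mat 1 \<and> A' ** gM = mat 1" unfolding invertible_def .
    then have "gM ** matrix_inv gM = mat 1 \<and> matrix_inv gM ** gM = mat 1"
      unfolding matrix_inv_def by (rule someI_ex)
    then have "(gM ** matrix_inv gM) $ k $ l = mat 1 $ k $ l" by simp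
    then show ?thesis by (simp add: matrix_matrix_mult_def mat_def g_def gi_def)
  qed
  have "(\<Sum>k\<in>UNIV. \<Sum>m\<in>UNIV. X' k * g k m * Tv m + Xv k * (\<Sum>i\<in>UNIV. Tv i * dg i k m) * Tv m + Xv k * g k m * Av m) = 0"
    by (rule geo_alg[OF sym dsym inv geo]) (use dN0 in \<open>simp add: XT'\<close>)
  then show ?thesis using DQ by simp
qed



lemma inner_mv_transpose: "((A::real^'n^'n) *v u) \<bullet> v = u \<bullet> (transpose A *v v)"
  using dot_lmul_matrix[of u "transpose A" v] vector_transpose_matrix[of u A] by simp

lemma chart_transfer:
  fixes A :: "('m::{t2_space, second_countable_topology}, 'n::finite) chart set"
    and G :: "('m, 'n) chart \<Rightarrow> real^'n \<Rightarrow> real^'n^'n"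
    and F :: "real \<times> real \<Rightarrow> 'm"
  assumes LM: "lorentzian_manifold A G" and cA: "c \<in> A" and dA: "d \<in> A"
    and SF: "smooth_family_on A W F" and pW: "p \<in> W"
    and Fc: "F p \<in> fst c" and Fd: "F p \<in> fst d"
  shows "coord_partial c F [(1,0)] p \<bullet> (G c (snd c (F p)) *v coord_partial c F [(0,1)] p)
       = coord_partial d F [(1,0)] p \<bullet> (G d (snd d (F p)) *v coord_partial d F [(0,1)] p)"
proof -
  have SA: "smooth_atlas A" using LM unfolding lorentzian_manifold_def by blast
  define \<tau> where "\<tau> = transition c d"
  define S\<tau> where "S\<tau> = snd c ` (fst c \<inter> fst d)"
  have sm\<tau>: "smooth_map_on S\<tau> \<tau>" using SA cA dA unfolding smooth_atlas_def \<tau>_def S\<tau>_def by blast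
  have chc: "is_chart c" using SA cA unfolding smooth_atlas_def by blast
  have invc: "inv_into (fst c) (snd c) (snd c y) = y" if "y \<in> fst c" for y
    using chc that unfolding is_chart_def homeomorphism_def by blast
  have \<tau>eq: "\<tau> (snd c y) = snd d y" if "y \<in> fst c" for y
    using invc[OF that] by (simp add: \<tau>_def transition_def)
  define xc where "xc = snd c (F p)"
  have xcS: "xc \<in> S\<tau>" using Fc Fd unfolding xc_def S\<tau>_def by blast
  have smk: "sm S\<tau> (\<lambda>y. \<tau> y $ k)" for k
    using sm_of_smooth[OF sm\<tau> axis_Basis[of k]] by (simp add: inner_axis)
  define D where "D h = (\<chi> k. \<Sum>b\<in>Basis. (h \<bullet> b) * pd [b] (\<lambda>y. \<tau> y $ k) xc)" for h
  have "(\<tau> has_derivative D) (at xc)"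
  proof (rule has_derivative_componentwise_within[THEN iffD2], intro ballI)
    fix b :: "real^'n" assume "b \<in> Basis"
    then obtain k where b: "b = axis k 1" unfolding Basis_vec_def by auto
    have "((\<lambda>y. \<tau> y $ k) has_derivative (\<lambda>h. \<Sum>b\<in>Basis. (h \<bullet> b) * pd [b] (\<lambda>y. \<tau> y $ k) xc)) (at xc)"
      using sm_C1[OF smk xcS] .
    then show "((\<lambda>y. \<tau> y \<bullet> b) has_derivative (\<lambda>h. D h \<bullet> b)) (at xc)"
      by (simp add: b inner_axis D_def)
  qed
  then have "\<tau> differentiable (at xc)" unfolding differentiable_def by blast
  then have D\<tau>: "(\<tau> has_derivative (\<lambda>h. jacobian \<tau> (at xc) *v h)) (at xc)"
    using jacobian_works by blast
  define J where "J = jacobian \<tau> (at xc)"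
  have Vtrans: "coord_partial d F [e] p = J *v coord_partial c F [e] p" if eB: "e \<in> Basis" for e
  proof -
    define Uc where "Uc = W \<inter> F -` fst c"
    define Ud where "Ud = W \<inter> F -` fst d"
    have smc: "sm Uc (\<lambda>q. snd c (F q) $ k)" for k unfolding Uc_def using sm_coord[OF SF cA] .
    have smd: "sm Ud (\<lambda>q. snd d (F q) $ k)" for k unfolding Ud_def using sm_coord[OF SF dA] .
    have pUc: "p \<in> Uc" and pUd: "p \<in> Ud" using pW Fc Fd by (auto simp: Uc_def Ud_def)
    define Vc where "Vc = coord_partial c F [e] p"
    define \<gamma> where "\<gamma> t = snd c (F (p + t *\<^sub>R e))" for t
    have g: "(\<gamma> has_vector_derivative Vc) (at 0)"
    proof (rule vec_deriv_comp)
      fix k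
      show "((\<lambda>t. \<gamma> t $ k) has_real_derivative Vc $ k) (at 0)"
        using sm_DERIV0[OF smc, of "[]" e p] eB pUc by (simp add: \<gamma>_def Vc_def coord_partial_def)
    qed
    have g0: "\<gamma> 0 = xc" by (simp add: \<gamma>_def xc_def)
    have "((\<tau> \<circ> \<gamma>) has_derivative ((\<lambda>h. J *v h) \<circ> (\<lambda>h. h *\<^sub>R Vc))) (at 0)"
      using diff_chain_at[OF g[unfolded has_vector_derivative_def]] D\<tau> g0 unfolding J_def by simp
    moreover have "((\<lambda>h. J *v h) \<circ> (\<lambda>h. h *\<^sub>R Vc)) = (\<lambda>h. h *\<^sub>R (J *v Vc))"
      by (rule ext) (simp add: matrix_vector_mult_scaleR)
    ultimately have tg: "((\<lambda>t. \<tau> (\<gamma> t)) has_vector_derivative (J *v Vc)) (at 0)"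
      unfolding has_vector_derivative_def o_def by simp
    define V where "V = (\<lambda>t::real. p + t *\<^sub>R e) -` (Uc \<inter> Ud)"
    have oUc: "open Uc" using sm_open[OF smc] .
    have oUd: "open Ud" using sm_open[OF smd] .
    have oV: "open V" unfolding V_def
      by (rule continuous_open_vimage[OF open_Int[OF oUc oUd]]) (auto intro!: continuous_intros)
    have V0: "0 \<in> V" using pUc pUd by (simp add: V_def)
    have eqV: "\<tau> (\<gamma> t) $ k = snd d (F (p + t *\<^sub>R e)) $ k" if "t \<in> V" for t k
    proof -
      have "F (p + t *\<^sub>R e) \<in> fst c" using that by (auto simp: V_def Uc_def)
      then show ?thesis by (simp add: \<gamma>_def \<tau>eq)
    qed
    have "coord_partial d F [e] p $ k = (J *v Vc) $ k" for k
    proof -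
      have 1: "((\<lambda>t. snd d (F (p + t *\<^sub>R e)) $ k) has_real_derivative coord_partial d F [e] p $ k) (at 0)"
        using sm_DERIV0[OF smd, of "[]" e p] eB pUd by (simp add: coord_partial_def)
      have 2: "((\<lambda>t. snd d (F (p + t *\<^sub>R e)) $ k) has_real_derivative (J *v Vc) $ k) (at 0)"
        by (rule has_field_derivative_transform_within_open[OF vec_deriv_nth[OF tg] oV V0]) (rule eqV)
      show ?thesis using DERIV_unique[OF 1 2] .
    qed
    then show ?thesis unfolding Vc_def by (simp add: vec_eq_iff)
  qed
  have xd: "snd d (F p) = \<tau> xc" using \<tau>eq[OF Fc] by (simp add: xc_def)
  have met: "G c xc = transpose J ** G d (\<tau> xc) ** J"
    using LM cA dA xcS unfolding lorentzian_manifold_def lorentzian_metric_def J_def S\<tau>_def \<tau>_def by blast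
  have e1B: "((1::real), (0::real)) \<in> Basis" by (rule basis_e1)
  have e2B: "((0::real), (1::real)) \<in> Basis" by (rule basis_e2)
  have met': "G c (snd c (F p)) = transpose J ** G d (\<tau> xc) ** J" using met by (simp add: xc_def)
  show ?thesis
    unfolding Vtrans[OF e1B] Vtrans[OF e2B] xd inner_mv_transpose met' matrix_vector_mul_assoc matrix_mul_assoc ..
qed



theorem proposition1:
  fixes A :: "('m::{t2_space, second_countable_topology}, 'n::finite) chart set"
    and G :: "('m, 'n) chart \<Rightarrow> real^'n \<Rightarrow> real^'n^'n"
    and F :: "real \<times> real \<Rightarrow> 'm"
    and J I :: "real set"
  assumes "lorentzian_manifold A G"
    and "is_interval I" and "0 \<in> I"
    and "null_connecting_family A G J I F"
    and "\<forall>c\<in>A. F (0, 0) \<in> fst c \<longrightarrow>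
           jacobi_field_coord c F 0 \<bullet> (G c (snd c (F (0, 0))) *v jacobi_field_coord c F 0) < 0"
  shows "\<forall>s\<in>I. \<forall>c\<in>A. F (0, s) \<in> fst c \<longrightarrow> jacobi_field_coord c F s \<noteq> 0"
proof (intro ballI impI notI)
  fix s1 c1 assume s1: "s1 \<in> I" and c1: "c1 \<in> A" and Fc1: "F (0, s1) \<in> fst c1"
    and X0: "jacobi_field_coord c1 F s1 = 0"
  note LM = assms(1) and NC = assms(4)
  obtain W where WJI: "J \<times> I \<subseteq> W" and SF: "smooth_family_on A W F"
    using NC unfolding null_connecting_family_def by blast
  have J0: "0 \<in> J" using NC unfolding null_connecting_family_def by blast
  have cover: "\<Union>(fst ` A) = UNIV" using LM unfolding lorentzian_manifold_def smooth_atlas_def by blast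
  define Qc where "Qc c \<sigma> = jacobi_field_coord c F \<sigma> \<bullet> (G c (snd c (F (0, \<sigma>))) *v coord_partial c F [(0,1)] (0, \<sigma>))"
    for c \<sigma>
  define ch where "ch \<sigma> = (SOME c. c \<in> A \<and> F (0, \<sigma>) \<in> fst c)" for \<sigma>
  have chA: "ch \<sigma> \<in> A \<and> F (0, \<sigma>) \<in> fst (ch \<sigma>)" for \<sigma>
  proof -
    have "F (0, \<sigma>) \<in> \<Union>(fst ` A)" using cover by simp
    then have "\<exists>c. c \<in> A \<and> F (0, \<sigma>) \<in> fst c" by blast
    then show ?thesis unfolding ch_def by (rule someI_ex)
  qed
  define q where "q \<sigma> = Qc (ch \<sigma>) \<sigma>" for \<sigma>
  have transfer: "Qc c \<sigma> = Qc d \<sigma>" if "\<sigma> \<in> I" "c \<in> A" "d \<in> A" "F (0, \<sigma>) \<in> fst c" "F (0, \<sigma>) \<in> fst d"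
    for c d \<sigma>
  proof -
    have "(0, \<sigma>) \<in> W" using WJI J0 that(1) by auto
    from chart_transfer[OF LM that(2,3) SF this that(4,5)]
    show ?thesis unfolding Qc_def jacobi_field_coord_def .
  qed
  define K where "K = closed_segment 0 s1"
  have cI: "convex I" using assms(2) by (simp add: is_interval_convex)
  have KI: "K \<subseteq> I" unfolding K_def using closed_segment_subset[OF assms(3) s1 cI] .
  have "(q has_derivative (\<lambda>h. 0)) (at \<sigma>0 within K)" if s0: "\<sigma>0 \<in> K" for \<sigma>0
  proof -
    define c where "c = ch \<sigma>0"
    have cA: "c \<in> A" and Fc: "F (0, \<sigma>0) \<in> fst c" using chA[of \<sigma>0] by (auto simp: c_def)
    have s0I: "\<sigma>0 \<in> I" using s0 KI by auto
    have "(Qc c has_real_derivative 0) (at \<sigma>0)"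
      unfolding Qc_def using Q_deriv[OF LM cA NC WJI SF s0I Fc] .
    then have "(Qc c has_derivative (\<lambda>h. 0)) (at \<sigma>0)"
      unfolding has_field_derivative_def by (simp add: mult_zero_left[abs_def])
    then have D: "(Qc c has_derivative (\<lambda>h. 0)) (at \<sigma>0 within K)" by (rule has_derivative_at_withinI)
    define U where "U = W \<inter> F -` fst c"
    have oU: "open U" unfolding U_def using sm_open[OF sm_coord[OF SF cA]] .
    define V where "V = (\<lambda>\<sigma>::real. ((0::real), \<sigma>)) -` U"
    have oV: "open V" unfolding V_def
      by (rule continuous_open_vimage[OF oU]) (auto intro!: continuous_intros)
    have V0: "\<sigma>0 \<in> V" using WJI J0 s0I Fc by (auto simp: V_def U_def)
    obtain d where d: "d > 0" "ball \<sigma>0 d \<subseteq> V" using oV V0 openE by blast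
    show ?thesis
    proof (rule has_derivative_transform_within[OF D d(1) s0])
      fix x' assume x': "x' \<in> K" "dist x' \<sigma>0 < d"
      then have "x' \<in> V" using d(2) by (auto simp: dist_commute)
      then have Fx: "F (0, x') \<in> fst c" by (auto simp: V_def U_def)
      have "x' \<in> I" using x' KI by auto
      then show "Qc c x' = q x'" unfolding q_def using transfer[OF _ cA _ Fx] chA[of x'] by blast
    qed
  qed
  then obtain C where C: "\<And>x. x \<in> K \<Longrightarrow> q x = C"
    using has_derivative_zero_constant[of K q] unfolding K_def by (metis convex_closed_segment)
  have "q s1 = q 0" using C[of s1] C[of 0] by (simp add: K_def)
  moreover have "q s1 = 0"
  proof -
    have "q s1 = Qc c1 s1" unfolding q_def using transfer[OF s1 _ c1 _ Fc1] chA[of s1] by blast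
    then show ?thesis by (simp add: Qc_def X0)
  qed
  moreover have "q 0 \<noteq> 0"
  proof -
    define c0 where "c0 = ch 0"
    have c0A: "c0 \<in> A" and Fc0: "F (0, 0) \<in> fst c0" using chA[of 0] by (auto simp: c0_def)
    have lf: "lorentzian_form (G c0 (snd c0 (F (0, 0))))"
      using LM c0A Fc0 unfolding lorentzian_manifold_def lorentzian_metric_def by blast
    have "null_geodesic_at A G F (0, 0)" using NC J0 assms(3) unfolding null_connecting_family_def by blast
    then have T: "coord_partial c0 F [(0,1)] (0, 0) \<noteq> 0"
      "coord_partial c0 F [(0,1)] (0, 0) \<bullet> (G c0 (snd c0 (F (0, 0))) *v coord_partial c0 F [(0,1)] (0, 0)) = 0"
      using c0A Fc0 unfolding null_geodesic_at_def Let_def by blast+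
    have X: "jacobi_field_coord c0 F 0 \<bullet> (G c0 (snd c0 (F (0, 0))) *v jacobi_field_coord c0 F 0) < 0"
      using assms(5) c0A Fc0 by blast
    have "Qc c0 0 \<noteq> 0" unfolding Qc_def using lor_nonorth[OF lf X T(2) T(1)] .
    then show ?thesis by (simp add: q_def c0_def)
  qed
  ultimately show False by simp
qed


end
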